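(* Let $\lambda,n_c,g_+,g_->0$ with $n_c<1$, let $0<\bar c<c_B/2$, set $\alpha=\sqrt{g_-/(g_++g_-)}$, and let $R_{vitro}>0$ be the unique positive root of $$\frac{\bar c}{c_B}\Big(\cosh(\sqrt\lambda R)+\sqrt{n_c}\sinh(\sqrt\lambda R)\Big)-\sqrt{n_c}\sinh\big(\sqrt\lambda(1-\alpha)R\big)-\cosh\big(\sqrt\lambda(1-\alpha)R\big)=0,$$ and $R_{vivo}>0$ the unique solution of $$\frac{c_B}{2}\Big(e^{-\alpha\sqrt\lambda R}+\frac{1-\sqrt{n_c}}{1+\sqrt{n_c}}\,e^{(\alpha-2)\sqrt\lambda R}\Big)=\bar c.$$ Let $\sigma_{vitro}=R_{vitro}\big(\sqrt{(g_++g_-)g_-}-g_-\big)$ and $\sigma_{vivo}=R_{vivo}\big(\sqrt{(g_++g_-)g_-}-g_-\big)$. Then $R_{vivo}\le R_{vitro}$ and $\sigma_{vivo}\le\sigma_{vitro}$.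
   Context: These quantities are the front position and velocity of the explicit traveling waves of the Hele-Shaw tumor model with nutrient, in vitro and in vivo respectively, for the piecewise constant choices $\psi(1)=\lambda$, $\psi(n)=\lambda n_c$ for $0<n<1$, $\psi(0)=0$, and $G(c)=g_+$ for $c>\bar c$, $G(c)=-g_-$ for $c<\bar c$. *)

theory Defs
  imports Complex_Main
begin

definition vitro_eq :: "real \<Rightarrow> real \<Rightarrow> real \<Rightarrow> real \<Rightarrow> real \<Rightarrow> real \<Rightarrow> real" where
  "vitro_eq lam nc cbar cB \<alpha> R =
     cbar / cB * (cosh (sqrt lam * R) + sqrt nc * sinh (sqrt lam * R))
     - sqrt nc * sinh (sqrt lam * (1 - \<alpha>) * R) - cosh (sqrt lam * (1 - \<alpha>) * R)"

definition vivo_lhs :: "real \<Rightarrow> real \<Rightarrow> real \<Rightarrow> real \<Rightarrow> real \<Rightarrow> real" where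
  "vivo_lhs lam nc cB \<alpha> R =
     cB / 2 * (exp (- \<alpha> * sqrt lam * R)
       + (1 - sqrt nc) / (1 + sqrt nc) * exp ((\<alpha> - 2) * sqrt lam * R))"

end

theory Submission
  imports Defs
begin

lemma cosh_r: "cosh (x::real) = (exp x + exp (-x)) / 2"
  by (simp add: cosh_def)
lemma sinh_r: "sinh (x::real) = (exp x - exp (-x)) / 2"
  by (simp add: sinh_def)

lemma key_ineq:
  fixes x a k :: real
  assumes x: "x > 0" and a0: "0 < a" and a1: "a < 1" and k0: "0 < k" and k1: "k < 1"
  shows "(1/2) * (exp (-a*x) + (1-k)/(1+k) * exp ((a-2)*x)) * (cosh x + k * sinh x)
         \<le> k * sinh ((1-a)*x) + cosh ((1-a)*x)"
proof -
  define q where "q = (1-k)/(1+k)"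
  have q1: "q * (1+k) = 1 - k" unfolding q_def using k0 by (simp add: field_simps)
  have q0: "0 \<le> q" "q \<le> 1" unfolding q_def using k0 k1 by (auto simp: field_simps)
  define eb where "eb = exp ((1-a)*x)"
  define enb where "enb = exp (-((1-a)*x))"
  define E3 where "E3 = exp (-(1+a)*x)"
  define E4 where "E4 = exp ((a-3)*x)"
  have p1: "exp (-a*x) * exp x = eb" unfolding eb_def by (simp add: exp_add[symmetric] algebra_simps)
  have p2: "exp (-a*x) * exp (-x) = E3" unfolding E3_def by (simp add: exp_add[symmetric] algebra_simps)
  have p3: "exp ((a-2)*x) * exp x = enb" unfolding enb_def by (simp add: exp_add[symmetric] algebra_simps)
  have p4: "exp ((a-2)*x) * exp (-x) = E4" unfolding E4_def by (simp add: exp_add[symmetric] algebra_simps)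
  have gen: "\<And>e1 e2 ex enx::real. (1/2) * (e1 + q * e2) * ((ex + enx)/2 + k * ((ex - enx)/2))
     = ((1+k)*(e1*ex) + (1-k)*(e1*enx) + q*(1+k)*(e2*ex) + q*(1-k)*(e2*enx)) / 4"
    by (simp add: field_simps)
  have lhs: "(1/2) * (exp (-a*x) + q * exp ((a-2)*x)) * (cosh x + k * sinh x)
     = ((1+k)*eb + (1-k)*E3 + q*(1+k)*enb + q*(1-k)*E4) / 4"
    unfolding cosh_r sinh_r gen p1 p2 p3 p4 ..
  have rhs: "k * sinh ((1-a)*x) + cosh ((1-a)*x) = ((1+k)*eb + (1-k)*enb)/2"
    unfolding cosh_r sinh_r eb_def[symmetric] enb_def[symmetric] by (simp add: field_simps)
  have i1: "E3 \<le> eb" unfolding E3_def eb_def using x a0 a1 by simp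
  have i2: "E4 \<le> enb" unfolding E4_def enb_def using x a0 a1 by (simp add: algebra_simps)
  have i3: "E3 \<le> enb" unfolding E3_def enb_def using x a0 a1 by (simp add: algebra_simps)
  have e0: "0 < E3" "0 < E4" "0 < eb" "0 < enb" unfolding E3_def E4_def eb_def enb_def by auto
  have j1: "(1-k)*E3 \<le> (1+k)*eb"
    using i1 k0 k1 e0 by (intro mult_mono) auto
  have j2: "q*(1-k)*E4 \<le> (1-k)*enb"
  proof -
    have "q*E4 \<le> 1*enb" using q0 i2 e0 by (intro mult_mono) auto
    thus ?thesis using k1 by (simp add: mult.assoc mult.left_commute mult_left_mono)
  qed
  show ?thesis
    unfolding q_def[symmetric] lhs rhs q1 using j1 j2 by argo
qed

theorem mainTheorem6:
  fixes lam nc gp gm cbar cB \<alpha> R_vitro R_vivo :: real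
  assumes "lam > 0" and "nc > 0" and "gp > 0" and "gm > 0" and "nc < 1"
    and "0 < cbar" and "cbar < cB / 2"
    and "\<alpha> = sqrt (gm / (gp + gm))"
    and "R_vitro > 0" and "vitro_eq lam nc cbar cB \<alpha> R_vitro = 0"
    and "\<forall>R>0. vitro_eq lam nc cbar cB \<alpha> R = 0 \<longrightarrow> R = R_vitro"
    and "R_vivo > 0" and "vivo_lhs lam nc cB \<alpha> R_vivo = cbar"
    and "\<forall>R>0. vivo_lhs lam nc cB \<alpha> R = cbar \<longrightarrow> R = R_vivo"
  shows "R_vivo \<le> R_vitro
    \<and> R_vivo * (sqrt ((gp + gm) * gm) - gm) \<le> R_vitro * (sqrt ((gp + gm) * gm) - gm)"
proof -
  note A = assms
  have cB: "cB > 0" using A(6,7) by linarith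
  have a0: "0 < \<alpha>" using A(3,4,8) by simp
  have a1: "\<alpha> < 1" using A(3,4,8) by simp
  have k0: "0 < sqrt nc" and k1: "sqrt nc < 1" using A(2,5) by auto
  have s0: "sqrt lam > 0" using A(1) by simp
  define x where "x = sqrt lam * R_vitro"
  have x0: "x > 0" unfolding x_def using s0 A(9) by simp
  define C where "C = cosh x + sqrt nc * sinh x"
  have C0: "C > 0" unfolding C_def using x0 k0 by (simp add: add_pos_nonneg)
  have eqv: "cbar / cB * C = sqrt nc * sinh ((1-\<alpha>)*x) + cosh ((1-\<alpha>)*x)"
    using A(10) unfolding vitro_eq_def C_def x_def by (simp add: algebra_simps)
  have K: "(1/2) * (exp (-\<alpha>*x) + (1-sqrt nc)/(1+sqrt nc) * exp ((\<alpha>-2)*x)) * C \<le> cbar / cB * C"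
    using key_ineq[OF x0 a0 a1 k0 k1] eqv unfolding C_def by linarith
  hence K2: "(1/2) * (exp (-\<alpha>*x) + (1-sqrt nc)/(1+sqrt nc) * exp ((\<alpha>-2)*x)) \<le> cbar / cB"
    using C0 by (metis mult_le_cancel_right_pos)
  have V1: "vivo_lhs lam nc cB \<alpha> R_vitro \<le> cbar"
  proof -
    have "vivo_lhs lam nc cB \<alpha> R_vitro = cB * ((1/2) * (exp (-\<alpha>*x) + (1-sqrt nc)/(1+sqrt nc) * exp ((\<alpha>-2)*x)))"
      unfolding vivo_lhs_def x_def by (simp add: algebra_simps)
    also have "\<dots> \<le> cB * (cbar / cB)" using K2 cB by (intro mult_left_mono) auto
    finally show ?thesis using cB by simp
  qed
  have le: "R_vivo \<le> R_vitro"
  proof (rule ccontr)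
    assume "\<not> ?thesis"
    hence lt: "R_vitro < R_vivo" by simp
    have q0: "0 \<le> (1-sqrt nc)/(1+sqrt nc)" using k0 k1 by simp
    have e1: "exp (- \<alpha> * sqrt lam * R_vivo) < exp (- \<alpha> * sqrt lam * R_vitro)"
      using lt a0 s0 by simp
    have e2': "(\<alpha> - 2) * sqrt lam * R_vivo \<le> (\<alpha> - 2) * sqrt lam * R_vitro"
    proof -
      have "(\<alpha> - 2) * sqrt lam < 0" using a1 s0 by (simp add: mult_neg_pos)
      thus ?thesis using lt by (simp add: mult_le_cancel_left_neg less_imp_le)
    qed
    hence e2: "exp ((\<alpha> - 2) * sqrt lam * R_vivo) \<le> exp ((\<alpha> - 2) * sqrt lam * R_vitro)" by simp
    have "(1-sqrt nc)/(1+sqrt nc) * exp ((\<alpha> - 2) * sqrt lam * R_vivo)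
        \<le> (1-sqrt nc)/(1+sqrt nc) * exp ((\<alpha> - 2) * sqrt lam * R_vitro)"
      using e2 q0 by (rule mult_left_mono)
    hence "vivo_lhs lam nc cB \<alpha> R_vivo < vivo_lhs lam nc cB \<alpha> R_vitro"
      unfolding vivo_lhs_def using e1 cB by (intro mult_strict_left_mono add_less_le_mono) auto
    thus False using V1 A(13) by linarith
  qed
  have "sqrt ((gp + gm) * gm) \<ge> sqrt (gm * gm)" using A(3,4) by (intro real_sqrt_le_mono) auto
  hence "sqrt ((gp + gm) * gm) - gm \<ge> 0" using A(4) by simp
  thus ?thesis using le by (simp add: mult_right_mono)
qed

end
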